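(* There exists $N$ such that for all integers $n\ge N$, all $k\in\{2,\dots,n-1\}$ and all $\gamma\in(0,1)$ satisfying $\frac{k}{\gamma}\le\frac{\sqrt n}{100}$, the non-deterministic communication complexity (in the $k$-party number-in-hand model) of $\mathrm{DISJ}'_{k,\gamma}(n)$ is at least $\frac{\gamma^2 n}{10^4\cdot k}-2\log_2(n)$.
   Context: $[n]=\{1,\dots,n\}$, $\binom{[n]}{a}$ is the set of $a$-element subsets of $[n]$, $\triangle$ is symmetric difference. $\mathrm{DISJ}'_{k,\gamma}(n)$ is the following partial function of $k$ inputs: party $i$ ($i=1,\dots,k$) receives $X_i\in\binom{[n]}{\lfloor n/k\rfloor}$; it is promised that either $X_1,\dots,X_k$ are pairwise disjoint (then the value is $1$) or $|X_i\triangle X_{i'}|\le\gamma\lfloor n/k\rfloor$ for all $i,i'\in[k]$ (then the value is $0$). Number-in-hand model: $k$ parties compute a (partial) function $f\colon\mathcal X_1\times\dots\times\mathcal X_k\to\{0,1\}$, party $i$ knowing only $X_i\in\mathcal X_i$; they write binary messages on a shared blackboard seen by all. A deterministic protocol specifies, as a function of the blackboard contents, whose turn it is to write, and the message written (a function of the blackboard and that party's input); at the end the output bit is a function of the blackboard contents. Its cost $CC(\pi)$ is the maximum over inputs of the number of bits written. A non-deterministic protocol is a finite set $\mathcal P$ of deterministic protocols, with cost $CC(\mathcal P)=\lceil\log_2|\mathcal P|\rceil+\max_{\pi\in\mathcal P}CC(\pi)$. It computes $f$ if for every input with $f=1$ some $\pi\in\mathcal P$ outputs $1$, and for every input with $f=0$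 every $\pi\in\mathcal P$ outputs $0$. The non-deterministic communication complexity of $f$ is the minimum cost of a non-deterministic protocol computing $f$. *)

theory Defs
  imports Complex_Main
begin

text \<open>The blackboard is a bit string. nxt gives, as a function of the blackboard,
  whose turn it is (None = the protocol has ended); msg gives the bit written,
  as a function of the blackboard and the input of the party whose turn it is;
  out gives the proto_out bit as a function of the blackboard.
  Party inputs are n-element subsets of nat; an input profile is X :: nat => nat set
  with X i the input of party i (i in 1..k).\<close>

record proto =
  nxt :: "bool list \<Rightarrow> nat option"
  msg :: "bool list \<Rightarrow> nat set \<Rightarrow> bool"
  out :: "bool list \<Rightarrow> bool"

fun transcript :: "proto \<Rightarrow> (nat \<Rightarrow> nat set) \<Rightarrow> nat \<Rightarrow> bool list \<Rightarrow> bool list" where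
  "transcript p X 0 b = b"
| "transcript p X (Suc m) b =
     (case nxt p b of None \<Rightarrow> b
      | Some i \<Rightarrow> transcript p X m (b @ [msg p b (X i)]))"

definition halts :: "proto \<Rightarrow> (nat \<Rightarrow> nat set) \<Rightarrow> nat \<Rightarrow> bool" where
  "halts p X m \<longleftrightarrow> nxt p (transcript p X m []) = None"

text \<open>Number of bits written on input X (= length of the final blackboard).\<close>
definition cost :: "proto \<Rightarrow> (nat \<Rightarrow> nat set) \<Rightarrow> nat" where
  "cost p X = (LEAST m. halts p X m)"

definition proto_out :: "proto \<Rightarrow> (nat \<Rightarrow> nat set) \<Rightarrow> bool" where
  "proto_out p X = out p (transcript p X (cost p X) [])"

definition inputs :: "nat \<Rightarrow> nat \<Rightarrow> (nat \<Rightarrow> nat set) set" where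
  "inputs n k = {X. (\<forall>i\<in>{1..k}. X i \<subseteq> {1..n} \<and> card (X i) = n div k)
                   \<and> (\<forall>i. i \<notin> {1..k} \<longrightarrow> X i = {})}"

definition valid_proto :: "nat \<Rightarrow> nat \<Rightarrow> proto \<Rightarrow> bool" where
  "valid_proto n k p \<longleftrightarrow>
     (\<forall>b i. nxt p b = Some i \<longrightarrow> i \<in> {1..k}) \<and>
     (\<forall>X\<in>inputs n k. \<exists>m. halts p X m)"

definition CC :: "nat \<Rightarrow> nat \<Rightarrow> proto \<Rightarrow> nat" where
  "CC n k p = Max (cost p ` inputs n k)"

definition symdiff :: "'a set \<Rightarrow> 'a set \<Rightarrow> 'a set" where
  "symdiff A B = (A - B) \<union> (B - A)"

definition disj_yes :: "nat \<Rightarrow> (nat \<Rightarrow> nat set) \<Rightarrow> bool" where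
  "disj_yes k X \<longleftrightarrow> (\<forall>i\<in>{1..k}. \<forall>j\<in>{1..k}. i \<noteq> j \<longrightarrow> X i \<inter> X j = {})"

definition disj_no :: "nat \<Rightarrow> nat \<Rightarrow> real \<Rightarrow> (nat \<Rightarrow> nat set) \<Rightarrow> bool" where
  "disj_no n k \<gamma> X \<longleftrightarrow>
     (\<forall>i\<in>{1..k}. \<forall>j\<in>{1..k}. real (card (symdiff (X i) (X j))) \<le> \<gamma> * real (n div k))"

text \<open>A non-deterministic protocol (finite set of valid deterministic protocols)
  computing DISJ'_{k,gamma}(n).\<close>
definition nd_computes :: "nat \<Rightarrow> nat \<Rightarrow> real \<Rightarrow> proto set \<Rightarrow> bool" where
  "nd_computes n k \<gamma> P \<longleftrightarrow>
     finite P \<and> P \<noteq> {} \<and> (\<forall>p\<in>P. valid_proto n k p) \<and>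
     (\<forall>X\<in>inputs n k.
        (disj_yes k X \<longrightarrow> (\<exists>p\<in>P. proto_out p X)) \<and>
        (disj_no n k \<gamma> X \<longrightarrow> (\<forall>p\<in>P. \<not> proto_out p X)))"

definition nd_cost :: "nat \<Rightarrow> nat \<Rightarrow> proto set \<Rightarrow> nat" where
  "nd_cost n k P = nat \<lceil>log 2 (real (card P))\<rceil> + Max (CC n k ` P)"

definition NCC_DISJ :: "nat \<Rightarrow> nat \<Rightarrow> real \<Rightarrow> nat" where
  "NCC_DISJ n k \<gamma> = Inf {nd_cost n k P | P. nd_computes n k \<gamma> P}"

end

theory Submission
  imports Defs "HOL-Library.FuncSet"
begin

lemma transcript_None: "nxt p b = None \<Longrightarrow> transcript p X d b = b"
  by (cases d) auto

lemma transcript_add: "transcript p X (a + d) b = transcript p X d (transcript p X a b)"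
proof (induction a arbitrary: b)
  case 0 then show ?case by simp
next
  case (Suc a)
  show ?case
  proof (cases "nxt p b")
    case None then show ?thesis by (simp add: transcript_None)
  next
    case (Some i) then show ?thesis using Suc by simp
  qed
qed

lemma transcript_stable:
  assumes "halts p X a" "a \<le> c" shows "transcript p X c [] = transcript p X a []"
proof -
  have "transcript p X c [] = transcript p X (c - a) (transcript p X a [])"
    using transcript_add[of p X a "c - a" "[]"] assms(2) by simp
  also have "\<dots> = transcript p X a []" using assms(1) unfolding halts_def by (simp add: transcript_None)
  finally show ?thesis .
qed

lemma transcript_prefix: "\<exists>s. transcript p X m b = b @ s"
proof (induction m arbitrary: b)
  case 0 then show ?case by simp
next
  case (Suc m)
  show ?case
  proof (cases "nxt p b")
    case None then show ?thesis by simp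
  next
    case (Some i)
    obtain s where "transcript p X m (b @ [msg p b (X i)]) = (b @ [msg p b (X i)]) @ s" using Suc.IH by blast
    then show ?thesis using Some by simp
  qed
qed

lemma transcript_length: "length (transcript p X m b) \<le> length b + m"
proof (induction m arbitrary: b)
  case 0 then show ?case by simp
next
  case (Suc m)
  show ?case
  proof (cases "nxt p b")
    case None then show ?thesis by simp
  next
    case (Some i)
    have "length (transcript p X m (b @ [msg p b (X i)])) \<le> length (b @ [msg p b (X i)]) + m" using Suc.IH by blast
    then show ?thesis using Some by simp
  qed
qed

definition fin :: "proto \<Rightarrow> (nat \<Rightarrow> nat set) \<Rightarrow> bool list" where
  "fin p X = transcript p X (cost p X) []"

lemma halts_cost: "valid_proto n k p \<Longrightarrow> X \<in> inputs n k \<Longrightarrow> halts p X (cost p X)"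
  unfolding valid_proto_def cost_def by (meson LeastI_ex)

lemma cost_le: "halts p X m \<Longrightarrow> cost p X \<le> m"
  unfolding cost_def by (rule Least_le)

lemma fin_eq: "valid_proto n k p \<Longrightarrow> X \<in> inputs n k \<Longrightarrow> cost p X \<le> M \<Longrightarrow> transcript p X M [] = fin p X"
  unfolding fin_def using transcript_stable halts_cost by blast

lemma mix_step:
  assumes "Ys \<noteq> {}" "\<forall>i. \<exists>Y\<in>Ys. Z i = Y i"
  shows "(\<forall>Y\<in>Ys. transcript p Y M b = t) \<Longrightarrow> transcript p Z M b = t"
proof (induction M arbitrary: b)
  case 0 then show ?case using assms(1) by auto
next
  case (Suc M)
  show ?case
  proof (cases "nxt p b")
    case None then show ?thesis using Suc.prems assms(1) by auto
  next
    case (Some i)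
    obtain Y0 where Y0: "Y0 \<in> Ys" "Z i = Y0 i" using assms(2) by blast
    have tY: "transcript p Y M (b @ [msg p b (Y i)]) = t" if "Y \<in> Ys" for Y
      using Suc.prems that Some by auto
    have eq: "msg p b (Y i) = msg p b (Z i)" if YY: "Y \<in> Ys" for Y
    proof -
      obtain s1 where s1: "t = (b @ [msg p b (Y i)]) @ s1"
        using tY[OF YY] transcript_prefix by metis
      obtain s2 where s2: "t = (b @ [msg p b (Y0 i)]) @ s2"
        using tY[OF Y0(1)] transcript_prefix by metis
      have "t ! length b = msg p b (Y i)" using s1 by (simp add: nth_append)
      moreover have "t ! length b = msg p b (Y0 i)" using s2 by (simp add: nth_append)
      ultimately show ?thesis using Y0(2) by simp
    qed
    have "\<forall>Y\<in>Ys. transcript p Y M (b @ [msg p b (Z i)]) = t"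
    proof
      fix Y assume YY: "Y \<in> Ys" then show "transcript p Y M (b @ [msg p b (Z i)]) = t" using tY[OF YY] eq[OF YY] by simp
    qed
    then show ?thesis using Suc.IH Some by simp
  qed
qed

lemma mix_fin:
  assumes "valid_proto n k p" "finite Ys" "Ys \<noteq> {}" "Ys \<subseteq> inputs n k" "Z \<in> inputs n k"
    "\<forall>i. \<exists>Y\<in>Ys. Z i = Y i" "\<forall>Y\<in>Ys. fin p Y = t"
  shows "fin p Z = t"
proof -
  define M where "M = Max (cost p ` insert Z Ys)"
  have le: "cost p Y \<le> M" if "Y \<in> insert Z Ys" for Y
    unfolding M_def using assms(2) that by auto
  have "\<forall>Y\<in>Ys. transcript p Y M [] = t" using fin_eq[OF assms(1)] le assms(4,7) by auto
  then have "transcript p Z M [] = t" using mix_step[OF assms(3,6)] by blast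
  then show ?thesis using fin_eq[OF assms(1,5)] le by auto
qed

lemma finite_inputs: "finite (inputs n k)"
proof -
  have "inputs n k \<subseteq> (\<lambda>f i. if i \<in> {1..k} then f i else {}) ` (PiE {1..k} (\<lambda>_. Pow {1..n}))"
  proof
    fix X assume X: "X \<in> inputs n k"
    show "X \<in> (\<lambda>f i. if i \<in> {1..k} then f i else {}) ` (PiE {1..k} (\<lambda>_. Pow {1..n}))"
    proof
      show "restrict X {1..k} \<in> PiE {1..k} (\<lambda>_. Pow {1..n})" using X unfolding inputs_def by auto
      show "X = (\<lambda>i. if i \<in> {1..k} then restrict X {1..k} i else {})"
      proof
        fix i show "X i = (if i \<in> {1..k} then restrict X {1..k} i else {})"
          using X unfolding inputs_def by (cases "i \<in> {1..k}") auto
      qed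
    qed
  qed
  moreover have "finite (PiE {1..k} (\<lambda>_. Pow {1..n}))" by (intro finite_PiE) auto
  ultimately show ?thesis using finite_subset by blast
qed

definition Ls :: "nat \<Rightarrow> nat \<Rightarrow> nat list set" where
  "Ls k m = {xs. set xs \<subseteq> {..<k} \<and> length xs = m}"

lemma Ls_finite: "finite (Ls k m)"
  unfolding Ls_def by (rule finite_lists_length_eq) auto

lemma Ls_card: "card (Ls k m) = k ^ m"
  unfolding Ls_def using card_lists_length_eq[of "{..<k}" m] by simp

lemma Ls_0: "Ls k 0 = {[]}"
  unfolding Ls_def by auto

lemma Ls_Suc: "Ls k (Suc m) = (\<lambda>(w, x). w # x) ` ({..<k} \<times> Ls k m)"
proof
  show "Ls k (Suc m) \<subseteq> (\<lambda>(w, x). w # x) ` ({..<k} \<times> Ls k m)"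
  proof
    fix xs assume "xs \<in> Ls k (Suc m)"
    then obtain w x where "xs = w # x" "w < k" "x \<in> Ls k m"
      unfolding Ls_def by (cases xs) auto
    then show "xs \<in> (\<lambda>(w, x). w # x) ` ({..<k} \<times> Ls k m)" by force
  qed
  show "(\<lambda>(w, x). w # x) ` ({..<k} \<times> Ls k m) \<subseteq> Ls k (Suc m)"
    unfolding Ls_def by auto
qed

lemma sum_Ls_Suc: "(\<Sum>x\<in>Ls k (Suc m). f x) = (\<Sum>w<k. \<Sum>x\<in>Ls k m. f (w # x))"
proof -
  have inj: "inj_on (\<lambda>(w, x). w # x) ({..<k} \<times> Ls k m)"
    by (auto simp: inj_on_def)
  have "(\<Sum>x\<in>Ls k (Suc m). f x) = (\<Sum>y\<in>{..<k} \<times> Ls k m. f (case y of (w, x) \<Rightarrow> w # x))"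
    unfolding Ls_Suc by (subst sum.reindex[OF inj]) (simp add: comp_def)
  also have "\<dots> = (\<Sum>(w,x)\<in>{..<k} \<times> Ls k m. f (w # x))"
    by (intro sum.cong) auto
  also have "\<dots> = (\<Sum>w<k. \<Sum>x\<in>Ls k m. f (w # x))"
    by (rule sum.cartesian_product[symmetric])
  finally show ?thesis .
qed

fun ham :: "nat list \<Rightarrow> nat list \<Rightarrow> nat" where
  "ham (x # xs) (y # ys) = (if x = y then 0 else 1) + ham xs ys"
| "ham _ _ = 0"

lemma ham_sym: "ham xs ys = ham ys xs"
  by (induction xs ys rule: ham.induct) auto

lemma ham_triangle: "length xs = length ys \<Longrightarrow> length ys = length zs \<Longrightarrow> ham xs zs \<le> ham xs ys + ham ys zs"
proof (induction xs arbitrary: ys zs)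
  case Nil then show ?case by simp
next
  case (Cons x xs)
  then obtain y ys' z zs' where "ys = y # ys'" "zs = z # zs'"
    by (metis length_Suc_conv)
  then show ?case using Cons.IH[of ys' zs'] Cons.prems by auto
qed

lemma Suc_split: "{g. g < Suc n \<and> P g} = (if P 0 then {0} else {}) \<union> Suc ` {g. g < n \<and> P (Suc g)}"
  by (auto simp: image_iff less_Suc_eq_0_disj)

lemma card_Suc_split: "card {g. g < Suc n \<and> P g} = (if P 0 then 1 else 0) + card {g. g < n \<and> P (Suc g)}"
  unfolding Suc_split by (simp add: card_image)

lemma ham_card: "length xs = length ys \<Longrightarrow> ham xs ys = card {g. g < length xs \<and> xs ! g \<noteq> ys ! g}"
proof (induction xs arbitrary: ys)
  case Nil then show ?case by simp
next
  case (Cons x xs)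
  then obtain y ys' where ys: "ys = y # ys'" by (metis length_Suc_conv)
  show ?case using Cons.IH[of ys'] Cons.prems unfolding ys
    by (simp only: length_Cons card_Suc_split nth_Cons_0 nth_Cons_Suc ham.simps) simp
qed

definition dset :: "nat list set \<Rightarrow> nat list \<Rightarrow> nat" where
  "dset S x = Min (ham x ` S)"

lemma dset_le: "finite S \<Longrightarrow> y \<in> S \<Longrightarrow> dset S x \<le> ham x y"
  unfolding dset_def by auto

lemma dset_ex: "finite S \<Longrightarrow> S \<noteq> {} \<Longrightarrow> \<exists>y\<in>S. dset S x = ham x y"
proof -
  assume "finite S" "S \<noteq> {}"
  then have "Min (ham x ` S) \<in> ham x ` S" by (intro Min_in) auto
  then show ?thesis unfolding dset_def by auto
qed

lemma exp_le_lin: fixes t :: real assumes "0 \<le> t" "t \<le> 1/2" shows "exp t \<le> 1 + 2 * t"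
  using exp_bound_lemma[of t] assms by simp

lemma quad:
  fixes u t :: real
  assumes "0 \<le> u" "u \<le> 1" "0 \<le> t" "t \<le> 1/2"
  shows "u * (1 + exp t * (1 - u)) \<le> exp (t^2)"
proof -
  define E where "E = exp t"
  have E1: "1 \<le> E" unfolding E_def using assms by simp
  have E2: "E - 1 \<le> 2 * t" unfolding E_def using exp_le_lin[of t] assms by simp
  have sq: "(E - 1)^2 \<le> (2*t)^2" using E1 E2 by (intro power_mono) auto
  have "4 * E * (u * (1 + E * (1 - u))) = (1 + E)^2 - (1 + E - 2*E*u)^2"
    by (simp add: algebra_simps power2_eq_square)
  also have "\<dots> \<le> (1 + E)^2" by simp
  also have "\<dots> = 4 * E + (E - 1)^2" by (simp add: algebra_simps power2_eq_square)
  also have "\<dots> \<le> 4 * E + 4 * t^2" using sq by (simp add: power_mult_distrib)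
  also have "\<dots> \<le> 4 * E * (1 + t^2)" using E1 by (simp add: algebra_simps) (metis mult_right_mono mult.commute zero_le_power2 mult_1 )
  finally have "u * (1 + E * (1 - u)) \<le> 1 + t^2" using E1 by simp
  also have "\<dots> \<le> exp (t^2)" by simp
  finally show ?thesis unfolding E_def .
qed

lemma perw:
  fixes S a b E Q :: real
  assumes "0 \<le> S" "0 < b" "0 \<le> a" "a \<le> b" "1 \<le> E" "0 \<le> Q" "S*b \<le> E*Q" "0 < a \<Longrightarrow> S*a \<le> Q"
  shows "S*b \<le> Q*(1 + E*(1 - a/b))"
proof (cases "a = 0")
  case True then show ?thesis using assms by (simp add: algebra_simps)
next
  case False
  then have a0: "0 < a" using assms by simp
  show ?thesis
  proof (cases "a * E \<le> b")
    case True
    have "E * (a / b) \<le> 1" using True assms by (simp add: field_simps)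
    then have "E \<le> 1 + E*(1 - a/b)" by (simp add: algebra_simps)
    then have "E * Q \<le> (1 + E*(1 - a/b)) * Q" using assms(6) by (rule mult_right_mono)
    then have "E * Q \<le> Q*(1 + E*(1 - a/b))" by (simp add: mult.commute)
    then show ?thesis using assms(7) by linarith
  next
    case False
    have "b * (b - a) \<le> (E * a) * (b - a)" using False assms by (intro mult_right_mono) (auto simp: mult.commute)
    then have key: "b / a \<le> 1 + E*(1 - a/b)" using a0 assms(2) by (simp add: field_simps)
    have "S * b = (S * a) * (b / a)" using a0 by simp
    also have "\<dots> \<le> Q * (b / a)" using assms(8)[OF a0] a0 assms(2) by (intro mult_right_mono) auto
    also have "\<dots> \<le> Q*(1 + E*(1 - a/b))" using key assms(6) by (intro mult_left_mono) auto
    finally show ?thesis .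
  qed
qed

lemma tal:
  fixes t :: real
  assumes "A \<subseteq> Ls k m" "A \<noteq> {}" "0 \<le> t" "t \<le> 1/2"
  shows "(\<Sum>x\<in>Ls k m. exp (t * dset A x)) * card A \<le> (real k ^ m)^2 * exp (t^2 * m)"
  using assms(1,2)
proof (induction m arbitrary: A)
  case 0
  then have "A = {[]}" using Ls_0 by auto
  then show ?case by (simp add: Ls_0 dset_def)
next
  case (Suc m)
  define B where "B = {y. \<exists>w. w # y \<in> A}"
  define Aw where "Aw w = {y. w # y \<in> A}" for w
  define N where "N = real k ^ m"
  define K where "K = exp (t^2 * real m)"
  define E where "E = exp t"
  have finA: "finite A" using Suc.prems(1) Ls_finite finite_subset by blast
  have BL: "B \<subseteq> Ls k m"
  proof
    fix y assume "y \<in> B"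
    then obtain w where "w # y \<in> A" unfolding B_def by auto
    then have "w # y \<in> Ls k (Suc m)" using Suc.prems(1) by blast
    then show "y \<in> Ls k m" unfolding Ls_def by simp
  qed
  have AwB: "Aw w \<subseteq> B" for w unfolding Aw_def B_def by auto
  have AwL: "Aw w \<subseteq> Ls k m" for w using AwB BL by blast
  have finB: "finite B" using BL Ls_finite finite_subset by blast
  have finAw: "finite (Aw w)" for w using AwL Ls_finite finite_subset by blast
  have Bne: "B \<noteq> {}"
  proof -
    obtain xs where xs: "xs \<in> A" using Suc.prems(2) by blast
    then obtain w y where "xs = w # y" using Suc.prems(1) unfolding Ls_def by (cases xs) auto
    then show ?thesis unfolding B_def using xs by auto
  qed
  have IHB: "(\<Sum>x\<in>Ls k m. exp (t * dset B x)) * card B \<le> N^2 * K"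
    using Suc.IH[OF BL Bne] unfolding N_def K_def .
  have IHA: "(\<Sum>x\<in>Ls k m. exp (t * dset (Aw w) x)) * card (Aw w) \<le> N^2 * K" if "Aw w \<noteq> {}" for w
    using Suc.IH[OF AwL that] unfolding N_def K_def .
  have d1: "dset A (w # x) \<le> 1 + dset B x" for w x
  proof -
    obtain y where y: "y \<in> B" "dset B x = ham x y" using dset_ex[OF finB Bne] by blast
    then obtain w' where "w' # y \<in> A" unfolding B_def by auto
    then have "dset A (w # x) \<le> ham (w # x) (w' # y)" using dset_le[OF finA] by blast
    also have "\<dots> \<le> 1 + ham x y" by simp
    finally show ?thesis using y by simp
  qed
  have d2: "dset A (w # x) \<le> dset (Aw w) x" if ne: "Aw w \<noteq> {}" for w x
  proof -
    obtain y where y: "y \<in> Aw w" "dset (Aw w) x = ham x y" using dset_ex[OF finAw ne] by blast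
    then have "dset A (w # x) \<le> ham (w # x) (w # y)" using dset_le[OF finA] unfolding Aw_def by blast
    then show ?thesis using y by simp
  qed
  define S where "S w = (\<Sum>x\<in>Ls k m. exp (t * dset A (w # x)))" for w
  have b0: "0 < real (card B)" using finB Bne by (simp add: card_gt_0_iff)
  have E1: "1 \<le> E" unfolding E_def using assms(3) by simp
  have per: "S w * card B \<le> N^2*K * (1 + E * (1 - card (Aw w) / card B))" for w
  proof (rule perw)
    show "0 \<le> S w" unfolding S_def by (intro sum_nonneg) auto
    show "0 < real (card B)" by fact
    show "0 \<le> real (card (Aw w))" by simp
    show "real (card (Aw w)) \<le> real (card B)" using card_mono[OF finB AwB] by simp
    show "1 \<le> E" by fact
    show "0 \<le> N^2*K" unfolding K_def by simp
    have "S w \<le> (\<Sum>x\<in>Ls k m. E * exp (t * dset B x))"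
      unfolding S_def E_def
    proof (intro sum_mono)
      fix x
      have "t * dset A (w # x) \<le> t * (1 + dset B x)" using d1[of w x] assms(3)
        by (intro mult_left_mono) auto
      then have "exp (t * dset A (w # x)) \<le> exp (t * (1 + dset B x))" by simp
      also have "\<dots> = exp t * exp (t * dset B x)" by (simp add: exp_add[symmetric] algebra_simps)
      finally show "exp (t * dset A (w # x)) \<le> exp t * exp (t * dset B x)" .
    qed
    also have "\<dots> = E * (\<Sum>x\<in>Ls k m. exp (t * dset B x))" by (simp add: sum_distrib_left)
    finally have "S w * card B \<le> (E * (\<Sum>x\<in>Ls k m. exp (t * dset B x))) * card B"
      by (intro mult_right_mono) auto
    also have "\<dots> = E * ((\<Sum>x\<in>Ls k m. exp (t * dset B x)) * card B)" by simp
    also have "\<dots> \<le> E * (N^2*K)" using IHB E1 by (intro mult_left_mono) auto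
    finally show "S w * card B \<le> E * (N^2*K)" .
    show "S w * card (Aw w) \<le> N^2*K" if "0 < real (card (Aw w))"
    proof -
      have ne: "Aw w \<noteq> {}" using that by auto
      have "S w \<le> (\<Sum>x\<in>Ls k m. exp (t * dset (Aw w) x))"
        unfolding S_def using d2[OF ne] assms(3) by (intro sum_mono) (simp add: mult_left_mono)
      then have "S w * card (Aw w) \<le> (\<Sum>x\<in>Ls k m. exp (t * dset (Aw w) x)) * card (Aw w)"
        by (intro mult_right_mono) auto
      also have "\<dots> \<le> N^2*K" using IHA[OF ne] .
      finally show ?thesis .
    qed
  qed
  have cardA: "card A = (\<Sum>w<k. card (Aw w))"
  proof -
    have "A = (\<lambda>(w, y). w # y) ` (SIGMA w:{..<k}. Aw w)"
    proof
      show "A \<subseteq> (\<lambda>(w, y). w # y) ` (SIGMA w:{..<k}. Aw w)"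
      proof
        fix xs assume xs: "xs \<in> A"
        then obtain w y where "xs = w # y" "w < k" using Suc.prems(1) unfolding Ls_def by (cases xs) auto
        then show "xs \<in> (\<lambda>(w, y). w # y) ` (SIGMA w:{..<k}. Aw w)" using xs unfolding Aw_def by force
      qed
      show "(\<lambda>(w, y). w # y) ` (SIGMA w:{..<k}. Aw w) \<subseteq> A" unfolding Aw_def by auto
    qed
    moreover have "inj_on (\<lambda>(w, y). w # y) (SIGMA w:{..<k}. Aw w)" by (auto simp: inj_on_def)
    ultimately have "card A = card (SIGMA w:{..<k}. Aw w)" by (metis card_image)
    also have "\<dots> = (\<Sum>w<k. card (Aw w))" using finAw by (simp add: card_SigmaI)
    finally show ?thesis .
  qed
  have a0: "0 < real (card A)" using finA Suc.prems(2) by (simp add: card_gt_0_iff)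
  have k0: "0 < k" using a0 cardA by (cases k) auto
  define a where "a = real (card A)"
  define b where "b = real (card B)"
  define u where "u = a / (k * b)"
  have awb: "real (card (Aw w)) \<le> b" for w using card_mono[OF finB AwB] unfolding b_def by simp
  have ak: "a \<le> k * b"
  proof -
    have "a = (\<Sum>w<k. real (card (Aw w)))" unfolding a_def cardA by simp
    also have "\<dots> \<le> (\<Sum>w<k. b)" using awb by (intro sum_mono) auto
    finally show ?thesis by simp
  qed
  have u0: "0 \<le> u" "u \<le> 1" unfolding u_def using ak b0 k0 a0 unfolding a_def b_def
    by (auto simp: field_simps)
  define T where "T = (\<Sum>x\<in>Ls k (Suc m). exp (t * dset A x))"
  have hT: "T = (\<Sum>w<k. S w)" unfolding T_def S_def by (rule sum_Ls_Suc)
  have h1: "T * b \<le> N^2*K * (\<Sum>w<k. (1 + E * (1 - card (Aw w) / b)))"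
    unfolding hT b_def sum_distrib_right sum_distrib_left using per by (intro sum_mono) auto
  have h2: "(\<Sum>w<k. (1 + E * (1 - card (Aw w) / b))) = k * (1 + E * (1 - u))"
  proof -
    have "(\<Sum>w<k. (1 + E * (1 - card (Aw w) / b))) = k + E * (k - (\<Sum>w<k. real (card (Aw w))) / b)"
      by (simp add: sum.distrib sum_subtractf sum_distrib_left[symmetric] sum_divide_distrib[symmetric])
    also have "(\<Sum>w<k. real (card (Aw w))) = a" unfolding a_def cardA by simp
    also have "k + E * (k - a / b) = k * (1 + E * (1 - u))"
      unfolding u_def using k0 b0 unfolding b_def by (simp add: field_simps)
    finally show ?thesis .
  qed
  have "T * a = (T * b) * (a / b)" using b0 unfolding b_def by simp
  also have "\<dots> \<le> (N^2*K * (k * (1 + E * (1 - u)))) * (a / b)"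
    using h1 h2 a0 b0 unfolding a_def b_def by (intro mult_right_mono) auto
  also have "\<dots> = N^2*K*k^2 * (u * (1 + E * (1 - u)))"
    unfolding u_def using k0 b0 unfolding b_def by (simp add: field_simps power2_eq_square)
  also have "\<dots> \<le> N^2*K*k^2 * exp (t^2)"
    unfolding E_def using quad[OF u0 assms(3,4)] unfolding K_def by (intro mult_left_mono) auto
  also have "\<dots> = (real k ^ Suc m)^2 * exp (t^2 * Suc m)"
    unfolding N_def K_def by (simp add: power_mult_distrib exp_add[symmetric] algebra_simps power2_eq_square)
  finally show ?case unfolding T_def a_def .
qed

definition tvset :: "nat \<Rightarrow> nat list \<Rightarrow> nat set" where
  "tvset k v = (\<lambda>g. g * k + v ! g + 1) ` {..<length v}"

definition shift :: "nat \<Rightarrow> nat \<Rightarrow> nat list \<Rightarrow> nat list" where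
  "shift k i s = map (\<lambda>x. (i + x) mod k) s"

definition inp :: "nat \<Rightarrow> nat list \<Rightarrow> nat \<Rightarrow> nat set" where
  "inp k s = (\<lambda>i. if i \<in> {1..k} then tvset k (shift k i s) else {})"

lemma div_part: assumes "a < k" "b < (k::nat)" "g * k + a = g' * k + b" shows "g = g' \<and> a = b"
proof -
  have "g = (g * k + a) div k" using assms(1) by simp
  also have "\<dots> = (g' * k + b) div k" using assms(3) by simp
  also have "\<dots> = g'" using assms(2) by simp
  finally have "g = g'" .
  then show ?thesis using assms(3) by simp
qed

lemma Ls_nth: "v \<in> Ls k m \<Longrightarrow> g < length v \<Longrightarrow> v ! g < k"
  unfolding Ls_def using nth_mem[of g v] by (auto simp del: nth_mem)

lemma tvset_inj: assumes "v \<in> Ls k m" shows "inj_on (\<lambda>g. g * k + v ! g + 1) {..<length v}"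
proof
  fix g g' assume "g \<in> {..<length v}" "g' \<in> {..<length v}" "g * k + v ! g + 1 = g' * k + v ! g' + 1"
  then show "g = g'" using div_part[of "v ! g" k "v ! g'" g g'] Ls_nth[OF assms] by auto
qed

lemma tvset_card: assumes v: "v \<in> Ls k m" shows "card (tvset k v) = m"
proof -
  have "card (tvset k v) = card {..<length v}" unfolding tvset_def by (rule card_image[OF tvset_inj[OF v]])
  then show ?thesis using v by (simp add: Ls_def)
qed

lemma tvset_sub: assumes "v \<in> Ls k m" shows "tvset k v \<subseteq> {1..k*m}"
proof
  fix x assume "x \<in> tvset k v"
  then obtain g where g: "g < length v" "x = g * k + v ! g + 1" unfolding tvset_def by auto
  have lv: "length v = m" using assms unfolding Ls_def by simp
  have "v ! g + 1 \<le> k" using Ls_nth[OF assms g(1)] by simp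
  then have "x \<le> g * k + k" using g by simp
  also have "\<dots> = (g + 1) * k" by simp
  also have "\<dots> \<le> m * k" using g(1) lv by (intro mult_right_mono) auto
  finally show "x \<in> {1..k*m}" using g by (simp add: mult.commute)
qed

lemma tvset_diff: assumes "length v = length w"
  shows "card (tvset k v - tvset k w) \<le> ham v w"
proof -
  have "tvset k v - tvset k w \<subseteq> (\<lambda>g. g * k + v ! g + 1) ` {g. g < length v \<and> v ! g \<noteq> w ! g}"
  proof
    fix x assume x: "x \<in> tvset k v - tvset k w"
    then obtain g where g: "g < length v" "x = g * k + v ! g + 1" unfolding tvset_def by auto
    have "v ! g \<noteq> w ! g"
    proof
      assume "v ! g = w ! g"
      then have "x \<in> tvset k w" using g assms unfolding tvset_def by auto
      then show False using x by simp
    qed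
    then show "x \<in> (\<lambda>g. g * k + v ! g + 1) ` {g. g < length v \<and> v ! g \<noteq> w ! g}" using g by auto
  qed
  then have "card (tvset k v - tvset k w) \<le> card ((\<lambda>g. g * k + v ! g + 1) ` {g. g < length v \<and> v ! g \<noteq> w ! g})"
    by (intro card_mono) auto
  also have "\<dots> \<le> card {g. g < length v \<and> v ! g \<noteq> w ! g}" by (rule card_image_le) auto
  also have "\<dots> = ham v w" using ham_card[OF assms] by simp
  finally show ?thesis .
qed

lemma symdiff_card: assumes "length v = length w"
  shows "card (symdiff (tvset k v) (tvset k w)) \<le> 2 * ham v w"
proof -
  have "card (symdiff (tvset k v) (tvset k w)) \<le> card (tvset k v - tvset k w) + card (tvset k w - tvset k v)"
    unfolding symdiff_def by (rule card_Un_le)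
  also have "\<dots> \<le> ham v w + ham w v" using tvset_diff assms by (metis add_mono)
  finally show ?thesis using ham_sym[of w v] by simp
qed

lemma shift_Ls: "0 < k \<Longrightarrow> s \<in> Ls k m \<Longrightarrow> shift k i s \<in> Ls k m"
  unfolding shift_def Ls_def by auto

lemma shift_inj: assumes "0 < k" shows "inj_on (shift k i) (Ls k m)"
proof
  fix xs ys assume xs: "xs \<in> Ls k m" and ys: "ys \<in> Ls k m" and eq: "shift k i xs = shift k i ys"
  have len: "length xs = length ys" using xs ys unfolding Ls_def by simp
  show "xs = ys"
  proof (rule nth_equalityI)
    show "length xs = length ys" by fact
    fix j assume j: "j < length xs"
    have "(i + xs ! j) mod k = (i + ys ! j) mod k"
      using arg_cong[OF eq, of "\<lambda>l. l ! j"] j len unfolding shift_def by simp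
    then have "xs ! j mod k = ys ! j mod k" by (simp add: nat_mod_eq_iff)
    then show "xs ! j = ys ! j" using Ls_nth[OF xs j] Ls_nth[OF ys] j len by simp
  qed
qed

lemma inp_inputs: assumes "0 < k" "s \<in> Ls k (n div k)" shows "inp k s \<in> inputs n k"
proof -
  have "k * (n div k) \<le> n" by simp
  then have "tvset k (shift k i s) \<subseteq> {1..n}" for i
  proof -
    assume kn: "k * (n div k) \<le> n"
    show ?thesis
    proof
      fix x assume "x \<in> tvset k (shift k i s)"
      then have "x \<in> {1..k * (n div k)}" using tvset_sub[OF shift_Ls[OF assms]] by blast
      then have "1 \<le> x" "x \<le> k * (n div k)" by auto
      moreover have "x \<le> n" using \<open>x \<le> k * (n div k)\<close> kn by (rule order_trans)
      ultimately show "x \<in> {1..n}" by simp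
    qed
  qed
  moreover have "card (tvset k (shift k i s)) = n div k" for i
    using tvset_card[OF shift_Ls[OF assms]] .
  ultimately show ?thesis unfolding inputs_def inp_def by auto
qed

lemma inp_yes: assumes "0 < k" "s \<in> Ls k m" shows "disj_yes k (inp k s)"
  unfolding disj_yes_def
proof (intro ballI impI)
  fix i j assume i: "i \<in> {1..k}" and j: "j \<in> {1..k}" and ij: "i \<noteq> j"
  show "inp k s i \<inter> inp k s j = {}"
  proof (rule ccontr)
    assume "inp k s i \<inter> inp k s j \<noteq> {}"
    then obtain x where "x \<in> tvset k (shift k i s)" "x \<in> tvset k (shift k j s)"
      using i j unfolding inp_def by auto
    then obtain g g' where g: "g < length s" "g' < length s"
      "g * k + (i + s ! g) mod k + 1 = g' * k + (j + s ! g') mod k + 1"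
      unfolding tvset_def shift_def by auto
    then have "g = g' \<and> (i + s ! g) mod k = (j + s ! g') mod k"
      using div_part[of "(i + s ! g) mod k" k "(j + s ! g') mod k" g g'] assms(1) by simp
    then have "(i + s ! g) mod k = (j + s ! g) mod k" by auto
    then have ijm: "i mod k = j mod k" by (simp add: nat_mod_eq_iff)
    show False
    proof (cases "i = k")
      case True
      then have "j mod k = 0" using ijm by simp
      then have "j = k" using j by (metis atLeastAtMost_iff le_neq_implies_less mod_less not_one_le_zero)
      then show False using True ij by simp
    next
      case False
      then have "i < k" using i by simp
      show False
      proof (cases "j = k")
        case True then show False using ijm \<open>i < k\<close> i by simp
      next
        case False then show False using ijm \<open>i < k\<close> j ij by simp
      qed
    qed
  qed
qed

definition p0 :: "nat \<Rightarrow> proto" where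
  "p0 n = \<lparr>nxt = (\<lambda>b. if length b < n then Some 1 else if length b = n then Some 2 else None),
          msg = (\<lambda>b S. if length b < n then Suc (length b) \<in> S else (\<forall>j<n. b ! j \<longrightarrow> Suc j \<notin> S)),
          out = (\<lambda>b. b ! n)\<rparr>"

lemma p0_tr: "a + l \<le> n \<Longrightarrow> transcript (p0 n) X l (map (\<lambda>j. Suc j \<in> X 1) [0..<a]) = map (\<lambda>j. Suc j \<in> X 1) [0..<a+l]"
proof (induction l arbitrary: a)
  case 0 then show ?case by simp
next
  case (Suc l)
  have "transcript (p0 n) X (Suc l) (map (\<lambda>j. Suc j \<in> X 1) [0..<a])
      = transcript (p0 n) X l (map (\<lambda>j. Suc j \<in> X 1) [0..<Suc a])"
    using Suc.prems by (simp add: p0_def)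
  also have "\<dots> = map (\<lambda>j. Suc j \<in> X 1) [0..<Suc a + l]" using Suc.IH[of "Suc a"] Suc.prems by simp
  finally show ?case by simp
qed

definition bit0 :: "nat \<Rightarrow> (nat \<Rightarrow> nat set) \<Rightarrow> bool" where
  "bit0 n X = (\<forall>j<n. Suc j \<in> X 1 \<longrightarrow> Suc j \<notin> X 2)"

lemma p0_full: "transcript (p0 n) X (Suc n) [] = map (\<lambda>j. Suc j \<in> X 1) [0..<n] @ [bit0 n X]"
proof -
  have "transcript (p0 n) X (Suc n) [] = transcript (p0 n) X 1 (transcript (p0 n) X n [])"
    using transcript_add[of "p0 n" X n 1 "[]"] by simp
  also have "transcript (p0 n) X n [] = map (\<lambda>j. Suc j \<in> X 1) [0..<n]"
    using p0_tr[of 0 n n X] by simp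
  also have "transcript (p0 n) X 1 (map (\<lambda>j. Suc j \<in> X 1) [0..<n]) = map (\<lambda>j. Suc j \<in> X 1) [0..<n] @ [bit0 n X]"
    by (simp add: p0_def bit0_def)
  finally show ?thesis .
qed

lemma p0_halts: "halts (p0 n) X (Suc n)"
  unfolding halts_def p0_full by (simp add: p0_def)

lemma p0_out: "proto_out (p0 n) X = bit0 n X"
proof -
  have h: "halts (p0 n) X (cost (p0 n) X)"
    unfolding cost_def using p0_halts by (rule LeastI)
  have "cost (p0 n) X \<le> Suc n" using p0_halts by (rule cost_le)
  then have "transcript (p0 n) X (Suc n) [] = transcript (p0 n) X (cost (p0 n) X) []"
    using transcript_stable[OF h] by blast
  then have "proto_out (p0 n) X = out (p0 n) (transcript (p0 n) X (Suc n) [])"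
    unfolding proto_out_def by simp
  also have "\<dots> = (map (\<lambda>j. Suc j \<in> X 1) [0..<n] @ [bit0 n X]) ! n"
    unfolding p0_full by (simp add: p0_def)
  also have "\<dots> = bit0 n X" by (simp add: nth_append)
  finally show ?thesis .
qed

lemma bit0_iff: "X 1 \<subseteq> {1..n} \<Longrightarrow> bit0 n X \<longleftrightarrow> X 1 \<inter> X 2 = {}"
  unfolding bit0_def
proof
  assume sub: "X 1 \<subseteq> {1..n}" and h: "\<forall>j<n. Suc j \<in> X 1 \<longrightarrow> Suc j \<notin> X 2"
  show "X 1 \<inter> X 2 = {}"
  proof (rule ccontr)
    assume "X 1 \<inter> X 2 \<noteq> {}"
    then obtain x where x: "x \<in> X 1" "x \<in> X 2" by auto
    then have "1 \<le> x" "x \<le> n" using sub by auto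
    then obtain j where "x = Suc j" "j < n" by (cases x) auto
    then show False using h x by auto
  qed
qed auto

lemma nonempty_computes:
  assumes "2 \<le> k" "1 \<le> n div k" "0 < \<gamma>" "\<gamma> < 1"
  shows "nd_computes n k \<gamma> {p0 n}"
  unfolding nd_computes_def
proof (intro conjI ballI)
  show "finite {p0 n}" "{p0 n} \<noteq> {}" by auto
  fix p assume "p \<in> {p0 n}"
  then have p: "p = p0 n" by simp
  have "\<forall>b i. nxt (p0 n) b = Some i \<longrightarrow> i \<in> {1..k}" using assms(1) by (simp add: p0_def)
  moreover have "\<forall>X\<in>inputs n k. \<exists>m. halts (p0 n) X m" using p0_halts by blast
  ultimately show "valid_proto n k p" unfolding valid_proto_def p by blast
next
  fix X assume X: "X \<in> inputs n k"
  have sub: "X 1 \<subseteq> {1..n}" "X 2 \<subseteq> {1..n}" "card (X 1) = n div k" "card (X 2) = n div k"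
    using X assms(1) unfolding inputs_def by auto
  show "disj_yes k X \<longrightarrow> (\<exists>p\<in>{p0 n}. proto_out p X)"
  proof
    assume "disj_yes k X"
    then have "X 1 \<inter> X 2 = {}" unfolding disj_yes_def using assms(1) by auto
    then show "\<exists>p\<in>{p0 n}. proto_out p X" using bit0_iff[of X n, OF sub(1)] p0_out by auto
  qed
  show "disj_no n k \<gamma> X \<longrightarrow> (\<forall>p\<in>{p0 n}. \<not> proto_out p X)"
  proof (intro impI ballI)
    fix p assume no: "disj_no n k \<gamma> X" and "p \<in> {p0 n}"
    then have p: "p = p0 n" by simp
    show "\<not> proto_out p X"
    proof
      assume "proto_out p X"
      then have dis: "X 1 \<inter> X 2 = {}" using bit0_iff[of X n, OF sub(1)] p0_out p by auto
      have fin: "finite (X 1)" "finite (X 2)" using sub finite_subset by auto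
      have "symdiff (X 1) (X 2) = X 1 \<union> X 2" unfolding symdiff_def using dis by auto
      then have "card (symdiff (X 1) (X 2)) = 2 * (n div k)" using card_Un_disjoint[OF fin dis] sub by simp
      moreover have "real (card (symdiff (X 1) (X 2))) \<le> \<gamma> * real (n div k)"
        using no assms(1) unfolding disj_no_def by auto
      moreover have "\<gamma> * real (n div k) < 2 * real (n div k)" using assms by simp
      ultimately show False by simp
    qed
  qed
qed

lemma fiber_bound:
  fixes \<gamma> :: real
  assumes comp: "nd_computes n k \<gamma> P" and k2: "2 \<le> k" and g0: "0 < \<gamma>" and g1: "\<gamma> < 1"
    and key: "\<forall>s\<in>Ls k (n div k). pp s \<in> P \<and> proto_out (pp s) (inp k s)"
  shows "real (card {s\<in>Ls k (n div k). (pp s, fin (pp s) (inp k s)) = (p, tt)})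
           \<le> real k * real k ^ (n div k) * exp (- (\<gamma>^2 * real (n div k) / 64))"
proof (rule ccontr)
  define m where "m = n div k"
  define C where "C = {s\<in>Ls k m. (pp s, fin (pp s) (inp k s)) = (p, tt)}"
  define N where "N = real k ^ m"
  define Q where "Q = exp (- (\<gamma>^2 * real m / 64))"
  define t where "t = \<gamma> / 8"
  define r where "r = \<gamma> * real m / 4"
  assume "\<not> ?thesis"
  then have big: "real k * N * Q < real (card C)" unfolding C_def N_def Q_def m_def by simp
  have k0: "0 < k" using k2 by simp
  have N0: "0 < N" unfolding N_def using k0 by simp
  have Q0: "0 < Q" unfolding Q_def by simp
  have CL: "C \<subseteq> Ls k m" unfolding C_def by auto
  have finC: "finite C" using CL Ls_finite finite_subset by blast
  have cpos: "0 < real (card C)" using big k0 N0 Q0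
    by (smt (verit) mult_pos_pos of_nat_0_less_iff)
  then have Cne: "C \<noteq> {}" by auto
  have Cprop: "s \<in> C \<Longrightarrow> p \<in> P \<and> proto_out p (inp k s) \<and> fin p (inp k s) = tt" for s
    using key unfolding C_def m_def by auto
  define S where "S i = shift k i ` C" for i
  have SL: "S i \<subseteq> Ls k m" for i unfolding S_def using CL shift_Ls[OF k0] by blast
  have cardS: "card (S i) = card C" for i
    unfolding S_def using inj_on_subset[OF shift_inj[OF k0] CL] by (rule card_image)
  have Sne: "S i \<noteq> {}" for i unfolding S_def using Cne by simp
  have finS: "finite (S i)" for i using SL Ls_finite finite_subset by blast
  define far where "far i = {x\<in>Ls k m. r < real (dset (S i) x)}" for i
  have t0: "0 \<le> t" "t \<le> 1/2" unfolding t_def using g0 g1 by auto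
  have expo: "exp (t^2 * real m) * exp (- (t * r)) = Q"
    unfolding Q_def t_def r_def by (simp add: exp_add[symmetric] power2_eq_square field_simps)
  have farb: "real (card (far i)) < N / k" for i
  proof -
    have "real (card (far i)) * exp (t * r) = (\<Sum>x\<in>far i. exp (t * r))" by simp
    also have "\<dots> \<le> (\<Sum>x\<in>far i. exp (t * dset (S i) x))"
      unfolding far_def using t0 by (intro sum_mono) (auto intro: mult_left_mono)
    also have "\<dots> \<le> (\<Sum>x\<in>Ls k m. exp (t * dset (S i) x))"
      unfolding far_def by (intro sum_mono2[OF Ls_finite]) auto
    finally have a: "real (card (far i)) * exp (t * r) * card C \<le> (\<Sum>x\<in>Ls k m. exp (t * dset (S i) x)) * card C"
      by (intro mult_right_mono) auto
    have b: "(\<Sum>x\<in>Ls k m. exp (t * dset (S i) x)) * card C \<le> N^2 * exp (t^2 * real m)"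
      using tal[OF SL Sne t0] cardS unfolding N_def by simp
    have "real (card (far i)) * card C = real (card (far i)) * exp (t * r) * card C * exp (- (t * r))"
      by (simp add: exp_minus field_simps)
    also have "\<dots> \<le> N^2 * exp (t^2 * real m) * exp (- (t * r))"
      using a b by (intro mult_right_mono) auto
    also have "\<dots> = N^2 * Q" using expo by (simp add: mult.assoc)
    also have "\<dots> < N / k * card C"
    proof -
      have "N^2 * Q = (N / k) * (k * N * Q)" using k0 by (simp add: power2_eq_square field_simps)
      also have "\<dots> < (N / k) * card C" using big N0 k0 by (intro mult_strict_left_mono) auto
      finally show ?thesis .
    qed
    finally have "real (card (far i)) * card C < N / k * card C" .
    then show ?thesis using cpos by (simp only: mult_less_cancel_right_pos)
  qed
  have "real (card (\<Union>i\<in>{1..k}. far i)) \<le> (\<Sum>i\<in>{1..k}. real (card (far i)))"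
    using card_UN_le[of "{1..k}" far] by (simp flip: of_nat_sum)
  also have "\<dots> < (\<Sum>i\<in>{1..k}. N / k)" using farb k0 by (intro sum_strict_mono) auto
  also have "\<dots> = N" using k0 by simp
  finally have "card (\<Union>i\<in>{1..k}. far i) < card (Ls k m)" unfolding N_def Ls_card by simp
  have "\<not> Ls k m \<subseteq> (\<Union>i\<in>{1..k}. far i)"
  proof
    assume sub: "Ls k m \<subseteq> (\<Union>i\<in>{1..k}. far i)"
    have "(\<Union>i\<in>{1..k}. far i) \<subseteq> Ls k m" unfolding far_def by auto
    then have "finite (\<Union>i\<in>{1..k}. far i)" using Ls_finite finite_subset by blast
    then have "card (Ls k m) \<le> card (\<Union>i\<in>{1..k}. far i)" using sub by (rule card_mono)
    then show False using \<open>card (\<Union>i\<in>{1..k}. far i) < card (Ls k m)\<close> by simp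
  qed
  then obtain x where x: "x \<in> Ls k m" "\<forall>i\<in>{1..k}. x \<notin> far i" by blast
  have "\<forall>i\<in>{1..k}. \<exists>s\<in>C. real (ham x (shift k i s)) \<le> r"
  proof
    fix i assume i: "i \<in> {1..k}"
    obtain y where y: "y \<in> S i" "dset (S i) x = ham x y" using dset_ex[OF finS Sne] by blast
    have "\<not> r < real (dset (S i) x)" using x i unfolding far_def by auto
    then show "\<exists>s\<in>C. real (ham x (shift k i s)) \<le> r" using y unfolding S_def by (auto simp: not_less)
  qed
  then obtain sel where sel: "\<forall>i\<in>{1..k}. sel i \<in> C \<and> real (ham x (shift k i (sel i))) \<le> r"
    by metis
  define Z where "Z = (\<lambda>i. if i \<in> {1..k} then inp k (sel i) i else {})"
  have sel_in: "inp k (sel i) \<in> inputs n k" if "i \<in> {1..k}" for i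
    using inp_inputs[OF k0] sel that CL unfolding m_def by blast
  have Zi: "Z i = tvset k (shift k i (sel i))" if "i \<in> {1..k}" for i
    using that unfolding Z_def inp_def by simp
  have Zin: "Z \<in> inputs n k"
    unfolding inputs_def
  proof (intro CollectI conjI ballI allI impI)
    fix i assume i: "i \<in> {1..k}"
    have "inp k (sel i) i \<subseteq> {1..n} \<and> card (inp k (sel i) i) = n div k"
      using sel_in[OF i] i unfolding inputs_def by blast
    then show "Z i \<subseteq> {1..n}" "card (Z i) = n div k" using i unfolding Z_def by auto
  next
    fix i assume "i \<notin> {1..k}" then show "Z i = {}" unfolding Z_def by auto
  qed
  have lenx: "length x = m" using x(1) unfolding Ls_def by simp
  have lensh: "length (shift k i (sel i)) = m" if "i \<in> {1..k}" for i
    using sel that CL unfolding shift_def Ls_def by auto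
  have Zno: "disj_no n k \<gamma> Z"
    unfolding disj_no_def
  proof (intro ballI)
    fix i j assume i: "i \<in> {1..k}" and j: "j \<in> {1..k}"
    have "card (symdiff (Z i) (Z j)) \<le> 2 * ham (shift k i (sel i)) (shift k j (sel j))"
      unfolding Zi[OF i] Zi[OF j] using lensh[OF i] lensh[OF j] by (intro symdiff_card) simp
    also have "ham (shift k i (sel i)) (shift k j (sel j)) \<le> ham (shift k i (sel i)) x + ham x (shift k j (sel j))"
      using lensh[OF i] lensh[OF j] lenx by (intro ham_triangle) auto
    finally have "card (symdiff (Z i) (Z j)) \<le> 2 * (ham x (shift k i (sel i)) + ham x (shift k j (sel j)))"
      by (simp add: ham_sym)
    then have "real (card (symdiff (Z i) (Z j))) \<le> 2 * (real (ham x (shift k i (sel i))) + real (ham x (shift k j (sel j))))"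
      by (metis of_nat_add of_nat_le_iff of_nat_mult of_nat_numeral)
    also have "\<dots> \<le> 2 * (r + r)" using sel i j by (intro mult_left_mono add_mono) auto
    also have "\<dots> = \<gamma> * real (n div k)" unfolding r_def m_def by simp
    finally show "real (card (symdiff (Z i) (Z j))) \<le> \<gamma> * real (n div k)" .
  qed
  have k1: "1 \<in> {1..k}" using k0 by simp
  have pP: "p \<in> P" using Cprop sel k1 by blast
  have valid: "valid_proto n k p" using comp pP unfolding nd_computes_def by blast
  define Ys where "Ys = (\<lambda>i. inp k (sel i)) ` {1..k}"
  have "fin p Z = tt"
  proof (rule mix_fin[OF valid, of Ys])
    show "finite Ys" "Ys \<noteq> {}" unfolding Ys_def using k0 by auto
    show "Ys \<subseteq> inputs n k" unfolding Ys_def using sel_in by blast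
    show "Z \<in> inputs n k" by fact
    show "\<forall>i. \<exists>Y\<in>Ys. Z i = Y i"
    proof
      fix i show "\<exists>Y\<in>Ys. Z i = Y i"
      proof (cases "i \<in> {1..k}")
        case True then show ?thesis unfolding Ys_def Z_def by auto
      next
        case False then show ?thesis unfolding Ys_def Z_def inp_def using k1 by auto
      qed
    qed
    show "\<forall>Y\<in>Ys. fin p Y = tt" unfolding Ys_def using sel Cprop by auto
  qed
  then have "proto_out p Z = out p tt" unfolding proto_out_def fin_def by simp
  also have "\<dots> = proto_out p (inp k (sel 1))"
    using Cprop sel k1 unfolding proto_out_def fin_def by auto
  also have "\<dots>" using Cprop sel k1 by auto
  finally have "proto_out p Z" .
  moreover have "\<not> proto_out p Z" using comp Zin Zno pP unfolding nd_computes_def by blast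
  ultimately show False by blast
qed

lemma geom2: "(\<Sum>i\<le>C. (2::nat)^i) < 2^(Suc C)"
  by (induction C) auto

lemma main_bound:
  fixes \<gamma> :: real
  assumes comp: "nd_computes n k \<gamma> P" and k2: "2 \<le> k" and g0: "0 < \<gamma>" and g1: "\<gamma> < 1"
  shows "\<gamma>^2 * real (n div k) / 64 - 1 - log 2 k \<le> real (nd_cost n k P)"
proof -
  define m where "m = n div k"
  have k0: "0 < k" using k2 by simp
  have ex: "\<exists>p. p \<in> P \<and> proto_out p (inp k s)" if "s \<in> Ls k m" for s
  proof -
    have "inp k s \<in> inputs n k" using inp_inputs[OF k0] that unfolding m_def by blast
    moreover have "disj_yes k (inp k s)" using inp_yes[OF k0 that] .
    ultimately show ?thesis using comp unfolding nd_computes_def by blast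
  qed
  define pp where "pp s = (SOME p. p \<in> P \<and> proto_out p (inp k s))" for s
  have key: "\<forall>s\<in>Ls k (n div k). pp s \<in> P \<and> proto_out (pp s) (inp k s)"
  proof
    fix s assume "s \<in> Ls k (n div k)"
    then have "\<exists>p. p \<in> P \<and> proto_out p (inp k s)" using ex unfolding m_def by blast
    then show "pp s \<in> P \<and> proto_out (pp s) (inp k s)" unfolding pp_def by (rule someI_ex)
  qed
  define kf where "kf s = (pp s, fin (pp s) (inp k s))" for s
  define Cm where "Cm = Max (CC n k ` P)"
  define L where "L = {t::bool list. set t \<subseteq> UNIV \<and> length t \<le> Cm}"
  have finP: "finite P" "P \<noteq> {}" using comp unfolding nd_computes_def by auto
  have kfL: "kf ` Ls k m \<subseteq> P \<times> L"
  proof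
    fix z assume "z \<in> kf ` Ls k m"
    then obtain s where s: "s \<in> Ls k m" "z = kf s" by auto
    have inps: "inp k s \<in> inputs n k" using inp_inputs[OF k0] s(1) unfolding m_def by blast
    have pP: "pp s \<in> P" using key s(1) unfolding m_def by auto
    have "length (fin (pp s) (inp k s)) \<le> cost (pp s) (inp k s)"
      unfolding fin_def using transcript_length[of "pp s" "inp k s" _ "[]"] by simp
    also have "\<dots> \<le> CC n k (pp s)" unfolding CC_def using finite_inputs inps by (intro Max_ge) auto
    also have "\<dots> \<le> Cm" unfolding Cm_def using finP pP by (intro Max_ge) auto
    finally show "z \<in> P \<times> L" using s pP unfolding kf_def L_def by auto
  qed
  have cardL: "card L < 2 ^ Suc Cm"
    unfolding L_def using card_lists_length_le[of "UNIV :: bool set" Cm] geom2[of Cm] by simp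
  have finL: "finite L" unfolding L_def using finite_lists_length_le[of "UNIV::bool set" Cm] by simp
  have ckf: "card (kf ` Ls k m) \<le> card P * 2 ^ Suc Cm"
  proof -
    have "card (kf ` Ls k m) \<le> card (P \<times> L)" using kfL finP finL by (intro card_mono) auto
    also have "\<dots> = card P * card L" by (simp add: card_cartesian_product)
    also have "\<dots> \<le> card P * 2 ^ Suc Cm" using cardL by simp
    finally show ?thesis .
  qed
  define N where "N = real k ^ m"
  define Q where "Q = exp (- (\<gamma>^2 * real m / 64))"
  have N0: "0 < N" unfolding N_def using k0 by simp
  have fb: "real (card {s\<in>Ls k m. kf s = z}) \<le> real k * N * Q" for z
    using fiber_bound[OF comp k2 g0 g1 key, of "fst z" "snd z"] unfolding kf_def N_def Q_def m_def
    by (cases z) auto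
  have "N = real (card (Ls k m))" unfolding N_def Ls_card by simp
  also have "\<dots> \<le> real (card (\<Union>z\<in>kf ` Ls k m. {s\<in>Ls k m. kf s = z}))"
    by (intro of_nat_mono card_mono) (auto intro: finite_subset[OF _ Ls_finite])
  also have "\<dots> \<le> (\<Sum>z\<in>kf ` Ls k m. real (card {s\<in>Ls k m. kf s = z}))"
    using card_UN_le[of "kf ` Ls k m" "\<lambda>z. {s\<in>Ls k m. kf s = z}"] Ls_finite by (simp flip: of_nat_sum)
  also have "\<dots> \<le> (\<Sum>z\<in>kf ` Ls k m. real k * N * Q)" using fb by (intro sum_mono) auto
  also have "\<dots> = real (card (kf ` Ls k m)) * (real k * N * Q)" by simp
  also have "\<dots> \<le> real (card P * 2 ^ Suc Cm) * (real k * N * Q)"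
  proof (rule mult_right_mono)
    show "real (card (kf ` Ls k m)) \<le> real (card P * 2 ^ Suc Cm)" using ckf by (rule of_nat_mono)
    show "0 \<le> real k * N * Q" using N0 by (simp add: Q_def)
  qed
  finally have "N * 1 \<le> N * (real (card P) * 2 ^ Suc Cm * real k * Q)" by (simp add: algebra_simps)
  then have one: "1 \<le> real (card P) * 2 ^ Suc Cm * real k * Q" using N0 by (simp only: mult_le_cancel_left_pos)
  have cP: "0 < real (card P)" using finP by (simp add: card_gt_0_iff)
  have Q0: "0 < Q" unfolding Q_def by simp
  have "0 \<le> log 2 (real (card P) * 2 ^ Suc Cm * real k * Q)" using one cP k0 Q0 by simp
  also have "\<dots> = log 2 (card P) + Suc Cm + log 2 k + log 2 Q"
    using cP k0 Q0 by (simp add: log_mult log_nat_power)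
  also have "log 2 Q = - (\<gamma>^2 * real m / 64) / ln 2" unfolding Q_def by simp
  finally have A: "(\<gamma>^2 * real m / 64) / ln 2 \<le> log 2 (card P) + Suc Cm + log 2 k" by simp
  have y0: "0 \<le> \<gamma>^2 * real m / 64" by simp
  have "\<gamma>^2 * real m / 64 \<le> (\<gamma>^2 * real m / 64) / ln 2"
  proof -
    have "(\<gamma>^2 * real m / 64) * ln 2 \<le> (\<gamma>^2 * real m / 64) * 1"
      using y0 ln_2_less_1 by (intro mult_left_mono) auto
    then show ?thesis by (simp add: le_divide_eq)
  qed
  with A have B: "\<gamma>^2 * real m / 64 - 1 - log 2 k \<le> log 2 (card P) + Cm" by simp
  have "log 2 (card P) \<le> real (nat \<lceil>log 2 (real (card P))\<rceil>)" by linarith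
  then have "log 2 (card P) + Cm \<le> real (nd_cost n k P)"
    unfolding nd_cost_def Cm_def by simp
  with B show ?thesis unfolding m_def by simp
qed

theorem theorem3:
  shows "\<exists>N::nat. \<forall>n\<ge>N. \<forall>k::nat. 2 \<le> k \<and> k \<le> n - 1 \<longrightarrow>
           (\<forall>\<gamma>::real. 0 < \<gamma> \<and> \<gamma> < 1 \<and> real k / \<gamma> \<le> sqrt (real n) / 100 \<longrightarrow>
              real (NCC_DISJ n k \<gamma>) \<ge> \<gamma>^2 * real n / (10^4 * real k) - 2 * log 2 (real n))"
proof (intro exI[of _ 4] allI impI, elim conjE)
  fix n k :: nat and \<gamma> :: real
  assume n4: "4 \<le> n" and k2: "2 \<le> k" and kn: "k \<le> n - 1" and g0: "0 < \<gamma>" and g1: "\<gamma> < 1"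
  define m where "m = n div k"
  have k0: "0 < k" using k2 by simp
  have "k \<le> n" using kn by simp
  then have m1: "1 \<le> n div k" using k0 div_greater_zero_iff[of n k] by simp
  define SS where "SS = {nd_cost n k P | P. nd_computes n k \<gamma> P}"
  have "nd_computes n k \<gamma> {p0 n}" using nonempty_computes[OF k2 m1 g0 g1] .
  then have "SS \<noteq> {}" unfolding SS_def by blast
  then have "Inf SS \<in> SS" by (rule Inf_nat_def1)
  then obtain P where P: "nd_computes n k \<gamma> P" "NCC_DISJ n k \<gamma> = nd_cost n k P"
    unfolding SS_def NCC_DISJ_def by auto
  have mb: "\<gamma>^2 * real m / 64 - 1 - log 2 k \<le> real (NCC_DISJ n k \<gamma>)"
    using main_bound[OF P(1) k2 g0 g1] P(2) unfolding m_def by simp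
  have nk: "real n \<le> real k * (real m + 1)"
  proof -
    have "n = k * m + n mod k" unfolding m_def by simp
    moreover have "n mod k < k" using k0 by simp
    ultimately have "n \<le> k * (m + 1)" by (simp add: algebra_simps)
    then show ?thesis by (metis of_nat_1 of_nat_add of_nat_le_iff of_nat_mult)
  qed
  have "real n / real k - 1 \<le> real m" using nk k0 by (simp add: field_simps)
  have g2: "0 < \<gamma>^2" "\<gamma>^2 \<le> 1" using g0 g1 by (auto simp: power_le_one)
  have t1: "\<gamma>^2 * real n / (10^4 * real k) \<le> \<gamma>^2 * (real n / real k) / 64"
    using g2 k0 by (simp add: field_simps)
  have t2: "\<gamma>^2 * (real n / real k) / 64 \<le> \<gamma>^2 * real m / 64 + 1/64"
  proof -
    have "\<gamma>^2 * (real n / real k) \<le> \<gamma>^2 * (real m + 1)"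
      using \<open>real n / real k - 1 \<le> real m\<close> g2 by (intro mult_left_mono) auto
    also have "\<dots> \<le> \<gamma>^2 * real m + 1" using g2 by (simp add: algebra_simps)
    finally show ?thesis by simp
  qed
  have lk: "log 2 k \<le> log 2 n" using kn k0 by simp
  have ln2: "2 \<le> log 2 n"
  proof -
    have "log 2 (4::real) = 2" by (simp add: log_nat_power[of 2 2 2, simplified])
    then show ?thesis using n4 by (metis log_le_cancel_iff one_less_numeral_iff semiring_norm(76) of_nat_le_iff of_nat_numeral zero_less_numeral order_less_le_trans)
  qed
  show "\<gamma>^2 * real n / (10^4 * real k) - 2 * log 2 (real n) \<le> real (NCC_DISJ n k \<gamma>)"
    using mb t1 t2 lk ln2 by linarith
qed

end
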